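(* For every nonempty graph $G$ and all integers $s,t\ge 1$, \[\hat r((s+t)K_2,G)\le \hat r(sK_2,G)+\hat r(tK_2,G).\]
   Context: All graphs are finite and simple; a graph is nonempty if it has at least one edge. $tK_2$ denotes a matching with $t$ edges (disjoint union of $t$ copies of $K_2$). For graphs $F,G,H$, $F\to(G,H)$ means every red--blue coloring of $E(F)$ contains a red copy of $G$ or a blue copy of $H$, and $\hat r(G,H)=\min\{|E(F)|:F\to(G,H)\}$. *)

theory Defs
  imports Main
begin

text \<open>A finite simple graph is represented by its edge set: a finite set of
  2-element subsets of nat. Isolated vertices are irrelevant for size Ramsey numbers.\<close>
definition graph :: "nat set set \<Rightarrow> bool" where
  "graph E \<longleftrightarrow> finite E \<and> (\<forall>e\<in>E. card e = 2)"

definition has_copy :: "nat set set \<Rightarrow> nat set set \<Rightarrow> bool" where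
  "has_copy H G \<longleftrightarrow> (\<exists>f. inj_on f (\<Union>G) \<and> (\<forall>e\<in>G. f ` e \<in> H))"

definition matching :: "nat \<Rightarrow> nat set set" where
  "matching t = {{2*i, 2*i+1} | i. i < t}"

definition arrows :: "nat set set \<Rightarrow> nat set set \<Rightarrow> nat set set \<Rightarrow> bool" where
  "arrows F G H \<longleftrightarrow> (\<forall>R\<subseteq>F. has_copy R G \<or> has_copy (F - R) H)"

definition size_ramsey :: "nat set set \<Rightarrow> nat set set \<Rightarrow> nat" where
  "size_ramsey G H = (LEAST m. \<exists>F. graph F \<and> card F = m \<and> arrows F G H)"

end

theory Submission
  imports Defs
begin

lemma matching_mem: "e \<in> matching n \<longleftrightarrow> (\<exists>i<n. e = {2*i, 2*i+1})"
  unfolding matching_def by auto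

lemma Union_matching: "\<Union>(matching n) = {..<2*n}"
proof
  show "\<Union>(matching n) \<subseteq> {..<2*n}" unfolding matching_def by auto
  show "{..<2*n} \<subseteq> \<Union>(matching n)"
  proof
    fix x assume "x \<in> {..<2*n}"
    then have "x div 2 < n" by auto
    moreover have "x \<in> {2*(x div 2), 2*(x div 2)+1}" by auto
    ultimately show "x \<in> \<Union>(matching n)" unfolding matching_def by blast
  qed
qed

lemma has_copy_matching:
  "has_copy H (matching n) \<longleftrightarrow> (\<exists>f. inj_on f {..<2*n} \<and> (\<forall>i<n. {f (2*i), f (2*i+1)} \<in> H))"
proof
  assume "has_copy H (matching n)"
  then obtain f where f: "inj_on f {..<2*n}" "\<forall>e\<in>matching n. f ` e \<in> H"
    unfolding has_copy_def Union_matching by blast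
  have "\<forall>i<n. {f (2*i), f (2*i+1)} \<in> H"
  proof (intro allI impI)
    fix i assume "i < n"
    then have "{2*i, 2*i+1} \<in> matching n" unfolding matching_mem by blast
    then have "f ` {2*i, 2*i+1} \<in> H" using f(2) by blast
    then show "{f (2*i), f (2*i+1)} \<in> H" by simp
  qed
  then show "\<exists>f. inj_on f {..<2*n} \<and> (\<forall>i<n. {f (2*i), f (2*i+1)} \<in> H)" using f(1) by blast
next
  assume "\<exists>f. inj_on f {..<2*n} \<and> (\<forall>i<n. {f (2*i), f (2*i+1)} \<in> H)"
  then obtain f where f: "inj_on f {..<2*n}" "\<forall>i<n. {f (2*i), f (2*i+1)} \<in> H" by blast
  have "\<forall>e\<in>matching n. f ` e \<in> H"
  proof
    fix e assume "e \<in> matching n"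
    then obtain i where i: "i<n" "e = {2*i,2*i+1}" unfolding matching_mem by blast
    have "{f (2*i), f (2*i+1)} \<in> H" using f(2) i(1) by blast
    then show "f ` e \<in> H" using i(2) by simp
  qed
  then show "has_copy H (matching n)" unfolding has_copy_def Union_matching using f(1) by blast
qed

lemma has_copy_mono: "H \<subseteq> H' \<Longrightarrow> has_copy H G \<Longrightarrow> has_copy H' G"
  unfolding has_copy_def by blast

lemma has_copy_img:
  assumes "has_copy H G" "inj h"
  shows "has_copy ((`) h ` H) G"
proof -
  obtain f where f: "inj_on f (\<Union>G)" "\<forall>e\<in>G. f ` e \<in> H" using assms(1) unfolding has_copy_def by blast
  have "inj_on (h \<circ> f) (\<Union>G)"
    using f(1) assms(2) by (meson comp_inj_on inj_on_subset subset_UNIV)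
  moreover have "\<forall>e\<in>G. (h \<circ> f) ` e \<in> (`) h ` H" using f(2) by (metis image_comp image_eqI)
  ultimately show ?thesis unfolding has_copy_def by blast
qed

lemma arrows_img:
  assumes "arrows F A B" "inj h"
  shows "arrows ((`) h ` F) A B"
  unfolding arrows_def
proof (intro allI impI)
  fix R assume R: "R \<subseteq> (`) h ` F"
  define R0 where "R0 = {e\<in>F. h ` e \<in> R}"
  have "R0 \<subseteq> F" unfolding R0_def by auto
  then have "has_copy R0 A \<or> has_copy (F - R0) B" using assms(1) unfolding arrows_def by blast
  then show "has_copy R A \<or> has_copy ((`) h ` F - R) B"
  proof
    assume "has_copy R0 A"
    then have "has_copy ((`) h ` R0) A" using has_copy_img assms(2) by blast
    moreover have "(`) h ` R0 \<subseteq> R" unfolding R0_def by auto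
    ultimately show ?thesis using has_copy_mono by blast
  next
    assume "has_copy (F - R0) B"
    then have "has_copy ((`) h ` (F - R0)) B" using has_copy_img assms(2) by blast
    moreover have "(`) h ` (F - R0) \<subseteq> (`) h ` F - R" unfolding R0_def by auto
    ultimately show ?thesis using has_copy_mono by blast
  qed
qed

lemma copy_vertex:
  fixes f :: "nat \<Rightarrow> 'a" and k :: nat
  assumes "\<forall>i<n. {f (2*i), f (2*i+1)} \<in> H" "k < 2*n"
  shows "f k \<in> \<Union>H"
proof -
  have i: "k div 2 < n" using assms(2) by auto
  have "k = 2*(k div 2) \<or> k = 2*(k div 2)+1" by auto
  then show ?thesis using assms(1) i by (metis UnionI insertI1 insert_commute)
qed

lemma arrows_union:
  assumes a1: "arrows F1 (matching s) G" and a2: "arrows F2 (matching t) G"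
    and disj: "\<Union>F1 \<inter> \<Union>F2 = {}"
  shows "arrows (F1 \<union> F2) (matching (s+t)) G"
  unfolding arrows_def
proof (intro allI impI)
  fix R assume R: "R \<subseteq> F1 \<union> F2"
  show "has_copy R (matching (s + t)) \<or> has_copy (F1 \<union> F2 - R) G"
  proof (cases "has_copy (F1 - R \<inter> F1) G \<or> has_copy (F2 - R \<inter> F2) G")
    case True
    have s1: "F1 - R \<inter> F1 \<subseteq> F1 \<union> F2 - R" "F2 - R \<inter> F2 \<subseteq> F1 \<union> F2 - R" by blast+
    from True have "has_copy (F1 \<union> F2 - R) G"
    proof
      assume "has_copy (F1 - R \<inter> F1) G" then show ?thesis using has_copy_mono[OF s1(1)] by blast
    next
      assume "has_copy (F2 - R \<inter> F2) G" then show ?thesis using has_copy_mono[OF s1(2)] by blast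
    qed
    then show ?thesis by blast
  next
    case False
    have "R \<inter> F1 \<subseteq> F1" "R \<inter> F2 \<subseteq> F2" by blast+
    then have "has_copy (R \<inter> F1) (matching s)" "has_copy (R \<inter> F2) (matching t)"
      using a1 a2 False unfolding arrows_def by blast+
    then obtain f1 f2 where f1: "inj_on f1 {..<2*s}" "\<forall>i<s. {f1 (2*i), f1 (2*i+1)} \<in> R \<inter> F1"
      and f2: "inj_on f2 {..<2*t}" "\<forall>i<t. {f2 (2*i), f2 (2*i+1)} \<in> R \<inter> F2"
      unfolding has_copy_matching by blast
    have v1: "f1 k \<in> \<Union>F1" if "k < 2*s" for k
      using copy_vertex[OF f1(2) that] by blast
    have v2: "f2 k \<in> \<Union>F2" if "k < 2*t" for k
      using copy_vertex[OF f2(2) that] by blast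
    define f where "f k = (if k < 2*s then f1 k else f2 (k - 2*s))" for k
    have inj: "inj_on f {..<2*(s+t)}"
    proof (rule inj_onI)
      fix x y assume x: "x \<in> {..<2*(s+t)}" and y: "y \<in> {..<2*(s+t)}" and e: "f x = f y"
      show "x = y"
      proof (cases "x < 2*s"; cases "y < 2*s")
        assume h: "x < 2*s" "y < 2*s"
        then have "f1 x = f1 y" using e unfolding f_def by simp
        then show ?thesis using inj_onD[OF f1(1)] h by simp
      next
        assume h: "x < 2*s" "\<not> y < 2*s"
        have "y - 2*s < 2*t" using y h by auto
        then have m2: "f2 (y - 2*s) \<in> \<Union>F2" by (rule v2)
        have m1: "f1 x \<in> \<Union>F1" using h by (intro v1) simp
        have "f1 x = f2 (y - 2*s)" using e h unfolding f_def by simp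
        then have "f1 x \<in> \<Union>F1 \<inter> \<Union>F2" using m1 m2 by simp
        then show ?thesis using disj by simp
      next
        assume h: "\<not> x < 2*s" "y < 2*s"
        have "x - 2*s < 2*t" using x h by auto
        then have m2: "f2 (x - 2*s) \<in> \<Union>F2" by (rule v2)
        have m1: "f1 y \<in> \<Union>F1" using h by (intro v1) simp
        have "f1 y = f2 (x - 2*s)" using e h unfolding f_def by (simp split: if_splits)
        then have "f1 y \<in> \<Union>F1 \<inter> \<Union>F2" using m1 m2 by simp
        then show ?thesis using disj by simp
      next
        assume h: "\<not> x < 2*s" "\<not> y < 2*s"
        then have "f2 (x - 2*s) = f2 (y - 2*s)" using e unfolding f_def by simp
        moreover have "x - 2*s \<in> {..<2*t}" "y - 2*s \<in> {..<2*t}" using h x y by auto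
        ultimately have "x - 2*s = y - 2*s" using inj_onD[OF f2(1)] by blast
        then show ?thesis using h by simp
      qed
    qed
    have edges: "\<forall>i<s+t. {f (2*i), f (2*i+1)} \<in> R"
    proof (intro allI impI)
      fix i assume i: "i < s + t"
      show "{f (2*i), f (2*i+1)} \<in> R"
      proof (cases "i < s")
        case True
        then have "f (2*i) = f1 (2*i)" "f (2*i+1) = f1 (2*i+1)" unfolding f_def by simp_all
        then show ?thesis using f1(2) True by simp
      next
        case False
        then have "f (2*i) = f2 (2*(i-s))" "f (2*i+1) = f2 (2*(i-s)+1)" "i - s < t"
          using i unfolding f_def by (simp_all add: right_diff_distrib' Suc_diff_le)
        then show ?thesis using f2(2) by simp
      qed
    qed
    have "has_copy R (matching (s + t))"
      unfolding has_copy_matching by (rule exI[of _ f]) (intro conjI inj edges)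
    then show ?thesis by blast
  qed
qed

lemma graph_img:
  assumes "graph F" "inj h"
  shows "graph ((`) h ` F)" "card ((`) h ` F) = card F"
proof -
  have "inj_on ((`) h) F" using assms(2) by (metis inj_image_eq_iff inj_onI)
  then show "card ((`) h ` F) = card F" by (simp add: card_image)
  have "card (h ` e) = card e" for e
    using assms(2) by (meson card_image inj_on_subset subset_UNIV)
  then show "graph ((`) h ` F)" using assms(1) unfolding graph_def by auto
qed

lemma combine:
  assumes g1: "graph F1" and a1: "arrows F1 (matching s) G"
    and g2: "graph F2" and a2: "arrows F2 (matching t) G"
  shows "\<exists>F. graph F \<and> card F = card F1 + card F2 \<and> arrows F (matching (s+t)) G"
proof -
  have fin: "finite (\<Union>F1)"
  proof (rule finite_Union)
    show "finite F1" using g1 unfolding graph_def by blast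
  next
    fix e assume "e \<in> F1"
    then have "card e = 2" using g1 unfolding graph_def by blast
    then show "finite e" by (intro card_ge_0_finite) simp
  qed
  define N where "N = Suc (Max (\<Union>F1))"
  define h where "h x = x + N" for x :: nat
  have inj: "inj h" unfolding h_def by (simp add: inj_on_def)
  define F2' where "F2' = (`) h ` F2"
  have g2': "graph F2'" "card F2' = card F2" using graph_img[OF g2 inj] unfolding F2'_def by auto
  have a2': "arrows F2' (matching t) G" using arrows_img[OF a2 inj] unfolding F2'_def .
  have lt: "x < N" if "x \<in> \<Union>F1" for x using Max_ge[OF fin that] unfolding N_def by simp
  have ge: "x \<ge> N" if "x \<in> \<Union>F2'" for x using that unfolding F2'_def h_def by auto
  have disj: "\<Union>F1 \<inter> \<Union>F2' = {}"
  proof (rule equals0I)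
    fix x assume "x \<in> \<Union>F1 \<inter> \<Union>F2'"
    then have "x < N" "x \<ge> N" using lt ge by blast+
    then show False by simp
  qed
  have edisj: "F1 \<inter> F2' = {}"
  proof (rule ccontr)
    assume "F1 \<inter> F2' \<noteq> {}"
    then obtain e where e: "e \<in> F1" "e \<in> F2'" by blast
    then have "card e = 2" using g1 unfolding graph_def by auto
    then obtain x where "x \<in> e" by (metis card_2_iff insertI1)
    then show False using e disj by blast
  qed
  have G1: "graph (F1 \<union> F2')" using g1 g2' unfolding graph_def by auto
  have "finite F1" "finite F2'" using g1 g2' unfolding graph_def by blast+
  then have G2: "card (F1 \<union> F2') = card F1 + card F2"
    using card_Un_disjoint[OF _ _ edisj] g2'(2) by simp
  have G3: "arrows (F1 \<union> F2') (matching (s+t)) G" using arrows_union[OF a1 a2' disj] .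
  show ?thesis by (rule exI[of _ "F1 \<union> F2'"]) (intro conjI G1 G2 G3)
qed

lemma base:
  assumes "graph G"
  shows "arrows G (matching 1) G"
  unfolding arrows_def
proof (intro allI impI)
  fix R assume R: "R \<subseteq> G"
  show "has_copy R (matching 1) \<or> has_copy (G - R) G"
  proof (cases "R = {}")
    case True
    then show ?thesis unfolding has_copy_def by (auto intro!: exI[of _ id])
  next
    case False
    then obtain e where e: "e \<in> R" by blast
    then have "card e = 2" using R assms unfolding graph_def by auto
    then obtain a b where ab: "e = {a, b}" "a \<noteq> b" by (meson card_2_iff)
    define f where "f k = (if k = 0 then a else b)" for k :: nat
    have "inj_on f {..<2*1}" using ab unfolding f_def inj_on_def by auto
    moreover have "\<forall>i<1. {f (2*i), f (2*i+1)} \<in> R" using e ab unfolding f_def by auto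
    ultimately show ?thesis unfolding has_copy_matching by blast
  qed
qed

lemma exists_arrow:
  assumes "graph G" "s \<ge> 1"
  shows "\<exists>F. graph F \<and> arrows F (matching s) G"
  using assms(2)
proof (induction s rule: dec_induct)
  case base
  then show ?case using Submission.base assms(1) by blast
next
  case (step n)
  then obtain F where "graph F" "arrows F (matching n) G" by blast
  then show ?case using combine[OF _ _ assms(1) Submission.base[OF assms(1)]] by auto
qed

theorem proposition2p2:
  fixes G :: "nat set set" and s t :: nat
  assumes "graph G" and "G \<noteq> {}" and "s \<ge> 1" and "t \<ge> 1"
  shows "size_ramsey (matching (s + t)) G
           \<le> size_ramsey (matching s) G + size_ramsey (matching t) G"
proof -
  let ?P = "\<lambda>s m. \<exists>F. graph F \<and> card F = m \<and> arrows F (matching s) G"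
  have e1: "\<exists>m. ?P s m" using exists_arrow[OF assms(1,3)] by blast
  have e2: "\<exists>m. ?P t m" using exists_arrow[OF assms(1,4)] by blast
  obtain F1 where F1: "graph F1" "card F1 = size_ramsey (matching s) G" "arrows F1 (matching s) G"
    using LeastI_ex[OF e1] unfolding size_ramsey_def by blast
  obtain F2 where F2: "graph F2" "card F2 = size_ramsey (matching t) G" "arrows F2 (matching t) G"
    using LeastI_ex[OF e2] unfolding size_ramsey_def by blast
  obtain F where "graph F" "card F = card F1 + card F2" "arrows F (matching (s+t)) G"
    using combine[OF F1(1,3) F2(1,3)] by blast
  then have "size_ramsey (matching (s+t)) G \<le> card F"
    unfolding size_ramsey_def by (intro Least_le) blast
  then show ?thesis using F1(2) F2(2) \<open>card F = card F1 + card F2\<close> by simp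
qed

end
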